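(* Let $(S,g_1^0,g_2^0,g_3^0,D_1,D_2,D_3,\xi)\in\mathrm{MC}_{\mathrm{pre}}$. Then for all $A,B\in C^\infty(S,\mathbb{R})$ with $A,B>0$ and all $\sigma\in\{-1,+1\}$, $$\big(S,\,Ag_1^0,\,Ag_2^0,\,Ag_3^0,\,\sigma AB^{g_2^0+g_3^0}D_1,\,\sigma AB^{g_3^0+g_1^0}D_2,\,\sigma AB^{g_1^0+g_2^0}D_3,\,\xi+\log A+(g_1^0+g_2^0+g_3^0)\log B\big)\in\mathrm{MC}_{\mathrm{pre}}.$$
   Context: "Cyclic $(i,j,k)$" means $(i,j,k)\in\{(1,2,3),(2,3,1),(3,1,2)\}$. Let $S$ be a smooth manifold diffeomorphic to $\mathbb{R}^3$ and $D_1,D_2,D_3$ a frame of vector fields on $S$; its structure functions $c_{jk}^i\in C^\infty(S,\mathbb{R})$ are defined by $[D_j,D_k]=\sum_{i=1}^3c_{jk}^iD_i$ (so $c_{jk}^i=-c_{kj}^i$). $\mathrm{MC}_{\mathrm{pre}}$ is the set of tuples $(S,g_1^0,g_2^0,g_3^0,D_1,D_2,D_3,\xi)$ with $g_i^0,\xi\in C^\infty(S,\mathbb{R})$ satisfying (E1) $0=g_2^0g_3^0+g_3^0g_1^0+g_1^0g_2^0$, and (E2) $0=D_i(g_j^0+g_k^0)+c_{ij}^j(g_i^0-g_j^0)+c_{ik}^k(g_i^0-g_k^0)-2D_i(\xi)g_i^0$ for all cyclic $(i,j,k)$. Here $B^{f}$ means $e^{f\log B}$. *)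

theory Defs
  imports "HOL-Analysis.Analysis"
begin

text \<open>The manifold S (diffeomorphic to R^3) is modelled as R^3 itself, as the type real^3.\<close>

type_synonym pt = "real^3"

text \<open>Smooth (C-infinity) real functions on R^3: differentiable everywhere, and all
  partial derivatives are again smooth (greatest fixed point, i.e. all iterated partial
  derivatives exist).\<close>
coinductive smooth_fun :: "(pt \<Rightarrow> real) \<Rightarrow> bool" where
  "(\<forall>p. f differentiable (at p)) \<Longrightarrow>
   (\<forall>i. smooth_fun (\<lambda>p. frechet_derivative f (at p) (axis i 1))) \<Longrightarrow> smooth_fun f"

definition smooth_vf :: "(pt \<Rightarrow> real^3) \<Rightarrow> bool" where
  "smooth_vf X \<longleftrightarrow> (\<forall>i. smooth_fun (\<lambda>p. X p $ i))"

definition vf_app :: "(pt \<Rightarrow> real^3) \<Rightarrow> (pt \<Rightarrow> real) \<Rightarrow> pt \<Rightarrow> real" where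
  "vf_app X f p = frechet_derivative f (at p) (X p)"

text \<open>Lie bracket [X,Y] of vector fields, so that [X,Y](f) = X(Y f) - Y(X f).\<close>
definition lie_bracket :: "(pt \<Rightarrow> real^3) \<Rightarrow> (pt \<Rightarrow> real^3) \<Rightarrow> pt \<Rightarrow> real^3" where
  "lie_bracket X Y p = frechet_derivative Y (at p) (X p) - frechet_derivative X (at p) (Y p)"

definition is_frame :: "(nat \<Rightarrow> pt \<Rightarrow> real^3) \<Rightarrow> bool" where
  "is_frame D \<longleftrightarrow> (\<forall>i\<in>{1,2,3}. smooth_vf (D i)) \<and>
     (\<forall>p (a::nat \<Rightarrow> real). (\<Sum>n\<in>{1,2,3::nat}. a n *\<^sub>R D n p) = 0 \<longrightarrow> (\<forall>n\<in>{1,2,3}. a n = 0))"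

text \<open>Structure functions: [D_j, D_k] = sum_i c^i_{jk} D_i; struct_fun D i j k = c^i_{jk}.\<close>
definition struct_fun :: "(nat \<Rightarrow> pt \<Rightarrow> real^3) \<Rightarrow> nat \<Rightarrow> nat \<Rightarrow> nat \<Rightarrow> pt \<Rightarrow> real" where
  "struct_fun D i j k p =
     (THE a::nat \<Rightarrow> real. (\<forall>n. n \<notin> {1,2,3} \<longrightarrow> a n = 0) \<and>
        lie_bracket (D j) (D k) p = (\<Sum>n\<in>{1,2,3::nat}. a n *\<^sub>R D n p)) i"

definition idx3 :: "'a \<Rightarrow> 'a \<Rightarrow> 'a \<Rightarrow> nat \<Rightarrow> 'a" where
  "idx3 x1 x2 x3 n = (if n = 1 then x1 else if n = 2 then x2 else x3)"

definition cyclic3 :: "(nat \<times> nat \<times> nat) set" where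
  "cyclic3 = {(1,2,3), (2,3,1), (3,1,2)}"

definition MC_pre :: "(pt \<Rightarrow> real) \<Rightarrow> (pt \<Rightarrow> real) \<Rightarrow> (pt \<Rightarrow> real) \<Rightarrow>
    (pt \<Rightarrow> real^3) \<Rightarrow> (pt \<Rightarrow> real^3) \<Rightarrow> (pt \<Rightarrow> real^3) \<Rightarrow> (pt \<Rightarrow> real) \<Rightarrow> bool" where
  "MC_pre g1 g2 g3 D1 D2 D3 \<xi> \<longleftrightarrow>
     (let g = idx3 g1 g2 g3; D = idx3 D1 D2 D3; c = struct_fun D in
     smooth_fun g1 \<and> smooth_fun g2 \<and> smooth_fun g3 \<and> smooth_fun \<xi> \<and> is_frame D \<and>
     (\<forall>p. 0 = g2 p * g3 p + g3 p * g1 p + g1 p * g2 p) \<and>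
     (\<forall>(i,j,k)\<in>cyclic3. \<forall>p.
        0 = vf_app (D i) (\<lambda>q. g j q + g k q) p
            + c j i j p * (g i p - g j p) + c k i k p * (g i p - g k p)
            - 2 * vf_app (D i) \<xi> p * g i p))"

end

theory Submission
  imports Defs
begin


inductive R :: "(pt \<Rightarrow> real) \<Rightarrow> bool" where
  Rbase: "smooth_fun f \<Longrightarrow> R f"
| Rconst: "R (\<lambda>p. c)"
| Radd: "R f \<Longrightarrow> R g \<Longrightarrow> R (\<lambda>p. f p + g p)"
| Rmult: "R f \<Longrightarrow> R g \<Longrightarrow> R (\<lambda>p. f p * g p)"
| Rexp: "R f \<Longrightarrow> R (\<lambda>p. exp (f p))"
| Rinv: "R f \<Longrightarrow> \<forall>p. f p > 0 \<Longrightarrow> R (\<lambda>p. inverse (f p))"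
| Rln: "R f \<Longrightarrow> \<forall>p. f p > 0 \<Longrightarrow> R (\<lambda>p. ln (f p))"

lemma smooth_diff: "smooth_fun f \<Longrightarrow> f differentiable (at p)"
  by (erule smooth_fun.cases) auto

lemma fd_eq: "(f has_derivative f') (at p) \<Longrightarrow> frechet_derivative f (at p) = f'"
  using frechet_derivative_at by metis

lemma R_props: "R f \<Longrightarrow> (\<forall>p. f differentiable (at p)) \<and> (\<forall>i. R (\<lambda>p. frechet_derivative f (at p) (axis i 1)))"
proof (induction rule: R.induct)
  case (Rbase f)
  then show ?case by (auto elim: smooth_fun.cases intro: R.Rbase)
next
  case (Rconst c)
  have "frechet_derivative (\<lambda>p. c) (at p) = (\<lambda>v. 0)" for p
    by (rule fd_eq) (rule has_derivative_const)
  then show ?case by (auto intro: R.Rconst)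
next
  case (Radd f g)
  have "frechet_derivative (\<lambda>p. f p + g p) (at p) = (\<lambda>v. frechet_derivative f (at p) v + frechet_derivative g (at p) v)" for p
    apply (rule fd_eq) apply (rule has_derivative_add)
    using Radd frechet_derivative_works by blast+
  then show ?case using Radd by (auto intro: R.Radd)
next
  case (Rmult f g)
  have "frechet_derivative (\<lambda>p. f p * g p) (at p) = (\<lambda>v. f p * frechet_derivative g (at p) v + frechet_derivative f (at p) v * g p)" for p
    apply (rule fd_eq) apply (rule has_derivative_mult)
    using Rmult frechet_derivative_works by blast+
  then show ?case using Rmult by (auto intro!: R.Radd R.Rmult)
next
  case (Rexp f)
  have "frechet_derivative (\<lambda>p. exp (f p)) (at p) = (\<lambda>v. frechet_derivative f (at p) v * exp (f p))" for p
    apply (rule fd_eq) apply (rule DERIV_compose_FDERIV[where f=exp])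
    using Rexp frechet_derivative_works by (auto intro: DERIV_exp)
  moreover have "(\<lambda>p. exp (f p)) differentiable (at p)" for p
    using Rexp differentiable_def DERIV_compose_FDERIV[where f=exp] frechet_derivative_works
    by (metis DERIV_exp)
  ultimately show ?case using Rexp by (auto intro!: R.Rmult R.Rexp)
next
  case (Rinv f)
  have "frechet_derivative (\<lambda>p. inverse (f p)) (at p) = (\<lambda>v. frechet_derivative f (at p) v * (- (inverse (f p) ^ Suc (Suc 0))))" for p
    apply (rule fd_eq) apply (rule DERIV_compose_FDERIV[where f=inverse])
    using Rinv frechet_derivative_works by (auto intro!: DERIV_inverse[simplified] simp: less_imp_neq[symmetric])
  then have "frechet_derivative (\<lambda>p. inverse (f p)) (at p) = (\<lambda>v. frechet_derivative f (at p) v * ((-1) * (inverse (f p) * inverse (f p))))" for p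
    by (simp add: power2_eq_square)
  moreover have "R (\<lambda>p. inverse (f p))" using Rinv by (auto intro: R.Rinv)
  moreover have "(\<lambda>p. inverse (f p)) differentiable (at p)" for p
    using Rinv differentiable_def DERIV_compose_FDERIV[where f=inverse] frechet_derivative_works
    by (metis DERIV_inverse less_irrefl)
  moreover have "R (\<lambda>p. frechet_derivative f (at p) (axis i 1) * ((-1) * (inverse (f p) * inverse (f p))))" for i
    using Rinv calculation(2) by (intro R.Rmult R.Rconst) auto
  ultimately show ?case by (simp only: ) blast
next
  case (Rln f)
  have "frechet_derivative (\<lambda>p. ln (f p)) (at p) = (\<lambda>v. frechet_derivative f (at p) v * inverse (f p))" for p
    apply (rule fd_eq) apply (rule DERIV_compose_FDERIV[where f=ln])
    using Rln frechet_derivative_works by (auto intro!: DERIV_ln)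
  moreover have "(\<lambda>p. ln (f p)) differentiable (at p)" for p
    using Rln differentiable_def DERIV_compose_FDERIV[where f=ln] frechet_derivative_works
    by (metis DERIV_ln)
  ultimately show ?case using Rln by (auto intro!: R.Rmult R.Rinv)
qed

lemma R_smooth: "R f \<Longrightarrow> smooth_fun f"
proof (coinduction arbitrary: f rule: smooth_fun.coinduct)
  case (smooth_fun f)
  then show ?case using R_props by blast
qed



lemma fd_app: "(f has_derivative f') (at p) \<Longrightarrow> frechet_derivative f (at p) v = f' v"
  using fd_eq by (metis)

lemma fdw: "f differentiable (at p) \<Longrightarrow> (f has_derivative frechet_derivative f (at p)) (at p)"
  using frechet_derivative_works by blast

lemma fd_lin_scale: "f differentiable (at p) \<Longrightarrow> frechet_derivative f (at p) (c *\<^sub>R v) = c *\<^sub>R frechet_derivative f (at p) v"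
  by (rule linear_cmul[OF has_derivative_linear[OF fdw]])

lemma fd_lin_scale_real: "(f::pt\<Rightarrow>real) differentiable (at p) \<Longrightarrow> frechet_derivative f (at p) (c *\<^sub>R v) = c * frechet_derivative f (at p) v"
  using fd_lin_scale[of f p c v] by simp

lemma fd_add: "f differentiable (at p) \<Longrightarrow> g differentiable (at p) \<Longrightarrow>
  frechet_derivative (\<lambda>q. f q + g q) (at p) v = frechet_derivative f (at p) v + frechet_derivative g (at p) v"
  by (rule fd_app[OF has_derivative_add[OF fdw fdw]])

lemma fd_mult: "(f::pt\<Rightarrow>real) differentiable (at p) \<Longrightarrow> g differentiable (at p) \<Longrightarrow>
  frechet_derivative (\<lambda>q. f q * g q) (at p) v = f p * frechet_derivative g (at p) v + frechet_derivative f (at p) v * g p"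
  by (rule fd_app[OF has_derivative_mult[OF fdw fdw]])

lemma fd_scaleR: "(f::pt\<Rightarrow>real) differentiable (at p) \<Longrightarrow> (g::pt \<Rightarrow> real^3) differentiable (at p) \<Longrightarrow>
  frechet_derivative (\<lambda>q. f q *\<^sub>R g q) (at p) v = f p *\<^sub>R frechet_derivative g (at p) v + frechet_derivative f (at p) v *\<^sub>R g p"
  by (rule fd_app[OF has_derivative_scaleR[OF fdw fdw]])

lemma fd_exp: "(f::pt\<Rightarrow>real) differentiable (at p) \<Longrightarrow>
  frechet_derivative (\<lambda>q. exp (f q)) (at p) v = frechet_derivative f (at p) v * exp (f p)"
  by (rule fd_app[OF DERIV_compose_FDERIV[where f=exp, OF DERIV_exp fdw]])

lemma fd_ln: "(f::pt\<Rightarrow>real) differentiable (at p) \<Longrightarrow> f p > 0 \<Longrightarrow>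
  frechet_derivative (\<lambda>q. ln (f q)) (at p) v = frechet_derivative f (at p) v * inverse (f p)"
  by (rule fd_app[OF DERIV_compose_FDERIV[where f=ln, OF DERIV_ln fdw]])

lemma fd_const: "frechet_derivative (\<lambda>q. c) (at p) v = 0"
  using fd_app[OF has_derivative_const, of c p v] by simp

lemma vf_diff: "smooth_vf X \<Longrightarrow> X differentiable (at p)"
proof -
  assume "smooth_vf X"
  then have h: "\<And>k. (\<lambda>x. X x $ k) differentiable (at p)"
    unfolding smooth_vf_def by (blast intro: smooth_diff)
  have "\<forall>i\<in>Basis. (\<lambda>x. X x \<bullet> i) differentiable (at p)"
  proof
    fix i :: "real^3" assume "i \<in> Basis"
    then obtain k where "i = axis k 1" unfolding Basis_vec_def by auto
    then show "(\<lambda>x. X x \<bullet> i) differentiable (at p)" using h[of k] by (simp add: cart_eq_inner_axis)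
  qed
  then show ?thesis by (subst differentiable_componentwise_within)
qed



lemma sum3: "(\<Sum>n\<in>{1,2,3::nat}. f n) = f 1 + f 2 + f 3"
  by (simp add: add.assoc)

lemma frame_ind: fixes a :: "nat \<Rightarrow> real" shows "is_frame D \<Longrightarrow> a 1 *\<^sub>R D 1 p + a 2 *\<^sub>R D 2 p + a 3 *\<^sub>R D 3 p = 0 \<Longrightarrow> a 1 = 0 \<and> a 2 = 0 \<and> a 3 = 0"
  unfolding is_frame_def sum3 by blast

lemma frame_rep:
  assumes fr: "is_frame D"
  shows "\<exists>a. (\<forall>n. n \<notin> {1,2,3} \<longrightarrow> a n = 0) \<and> x = (\<Sum>n\<in>{1,2,3::nat}. a n *\<^sub>R D n p)"
proof -
  let ?B = "{D 1 p, D 2 p, D 3 p}"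
  have d12: "D 1 p \<noteq> D 2 p"
  proof
    assume e: "D 1 p = D 2 p"
    have "(\<lambda>n::nat. if n = 1 then 1 else if n = 2 then -1 else (0::real)) 1 = 0"
      using frame_ind[OF fr, of "\<lambda>n::nat. if n = 1 then 1 else if n = 2 then -1 else (0::real)" p] e by simp
    then show False by simp
  qed
  have d13: "D 1 p \<noteq> D 3 p"
  proof
    assume e: "D 1 p = D 3 p"
    have "(\<lambda>n::nat. if n = 1 then 1 else if n = 3 then -1 else (0::real)) 1 = 0"
      using frame_ind[OF fr, of "\<lambda>n::nat. if n = 1 then 1 else if n = 3 then -1 else (0::real)" p] e by simp
    then show False by simp
  qed
  have d23: "D 2 p \<noteq> D 3 p"
  proof
    assume e: "D 2 p = D 3 p"
    have "(\<lambda>n::nat. if n = 2 then 1 else if n = 3 then -1 else (0::real)) 2 = 0"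
      using frame_ind[OF fr, of "\<lambda>n::nat. if n = 2 then 1 else if n = 3 then -1 else (0::real)" p] e by simp
    then show False by simp
  qed
  have ind: "independent ?B"
    unfolding independent_explicit
  proof (intro conjI allI impI ballI)
    show "finite ?B" by simp
    fix c v assume s: "(\<Sum>v\<in>?B. c v *\<^sub>R v) = 0" and v: "v \<in> ?B"
    have "c (D 1 p) *\<^sub>R D 1 p + c (D 2 p) *\<^sub>R D 2 p + c (D 3 p) *\<^sub>R D 3 p = 0"
      using s d12 d13 d23 by (simp add: add.assoc)
    then have "(\<lambda>n. c (D n p)) 1 = 0 \<and> (\<lambda>n. c (D n p)) 2 = 0 \<and> (\<lambda>n. c (D n p)) 3 = 0"
      by (intro frame_ind[OF fr]) simp
    then show "c v = 0" using v by auto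
  qed
  have card: "card ?B = 3" using d12 d13 d23 by simp
  have "UNIV \<subseteq> span ?B"
  proof (rule card_ge_dim_independent[OF _ ind])
    show "dim (UNIV::(real^3) set) \<le> card ?B" using card by simp
  qed simp
  then have "x \<in> span ?B" by blast
  then obtain u where u: "x = (\<Sum>v\<in>?B. u v *\<^sub>R v)"
    using span_finite[of ?B] by auto
  show ?thesis
  proof (intro exI conjI)
    let ?a = "\<lambda>n. if n \<in> {1,2,3::nat} then u (D n p) else 0"
    show "\<forall>n. n \<notin> {1,2,3} \<longrightarrow> ?a n = 0" by simp
    show "x = (\<Sum>n\<in>{1,2,3::nat}. ?a n *\<^sub>R D n p)"
    proof -
      have "x = u (D 1 p) *\<^sub>R D 1 p + u (D 2 p) *\<^sub>R D 2 p + u (D 3 p) *\<^sub>R D 3 p"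
        using u d12 d13 d23 by (simp add: add.assoc)
      then show ?thesis unfolding sum3 by simp
    qed
  qed
qed

lemma struct_unique:
  assumes fr: "is_frame D" and a0: "\<forall>n. n \<notin> {1,2,3} \<longrightarrow> a n = 0"
    and rep: "lie_bracket (D j) (D k) p = (\<Sum>n\<in>{1,2,3::nat}. a n *\<^sub>R D n p)"
  shows "struct_fun D i j k p = a i"
proof -
  have "(THE a::nat \<Rightarrow> real. (\<forall>n. n \<notin> {1,2,3} \<longrightarrow> a n = 0) \<and>
        lie_bracket (D j) (D k) p = (\<Sum>n\<in>{1,2,3::nat}. a n *\<^sub>R D n p)) = a"
  proof (rule the_equality)
    show "(\<forall>n. n \<notin> {1,2,3} \<longrightarrow> a n = 0) \<and> lie_bracket (D j) (D k) p = (\<Sum>n\<in>{1,2,3::nat}. a n *\<^sub>R D n p)"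
      using a0 rep by blast
    fix b assume b: "(\<forall>n. n \<notin> {1,2,3} \<longrightarrow> b n = 0) \<and> lie_bracket (D j) (D k) p = (\<Sum>n\<in>{1,2,3::nat}. b n *\<^sub>R D n p)"
    have "(\<lambda>n. b n - a n) 1 *\<^sub>R D 1 p + (\<lambda>n. b n - a n) 2 *\<^sub>R D 2 p + (\<lambda>n. b n - a n) 3 *\<^sub>R D 3 p = 0"
      using b rep by (simp add: algebra_simps)
    then have "(\<lambda>n. b n - a n) 1 = 0 \<and> (\<lambda>n. b n - a n) 2 = 0 \<and> (\<lambda>n. b n - a n) 3 = 0"
      by (rule frame_ind[OF fr])
    then show "b = a"
    proof (intro ext)
      fix n
      assume h: "(\<lambda>n. b n - a n) 1 = 0 \<and> (\<lambda>n. b n - a n) 2 = 0 \<and> (\<lambda>n. b n - a n) 3 = 0"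
      show "b n = a n"
      proof (cases "n \<in> {1,2,3}")
        case True
        then consider "n = 1" | "n = 2" | "n = 3" by blast
        then show ?thesis using h by cases auto
      next
        case False
        then show ?thesis using a0 b by simp
      qed
    qed
  qed
  then show ?thesis unfolding struct_fun_def by simp
qed



lemma frame_scale:
  assumes fr: "is_frame D" and nz: "\<forall>n\<in>{1,2,3}. \<forall>q. F n q \<noteq> 0"
    and sm: "\<forall>n\<in>{1,2,3}. smooth_fun (F n)"
  shows "is_frame (\<lambda>n q. F n q *\<^sub>R D n q)"
  unfolding is_frame_def
proof (intro conjI ballI allI impI)
  fix i :: nat assume i: "i \<in> {1,2,3}"
  then have "smooth_vf (D i)" using fr unfolding is_frame_def by blast
  then have sk: "smooth_fun (\<lambda>q. D i q $ k)" for k unfolding smooth_vf_def by blast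
  show "smooth_vf (\<lambda>q. F i q *\<^sub>R D i q)"
    unfolding smooth_vf_def
  proof
    fix k
    have "R (\<lambda>q. F i q * D i q $ k)" using sm i sk
      by (intro R.Rmult R.Rbase) auto
    then show "smooth_fun (\<lambda>q. (F i q *\<^sub>R D i q) $ k)" by (simp add: R_smooth)
  qed
next
  fix p and a :: "nat \<Rightarrow> real" and n :: nat
  assume s: "(\<Sum>n\<in>{1,2,3}. a n *\<^sub>R F n p *\<^sub>R D n p) = 0" and n: "n \<in> {1,2,3}"
  have "(\<lambda>n. a n * F n p) 1 *\<^sub>R D 1 p + (\<lambda>n. a n * F n p) 2 *\<^sub>R D 2 p + (\<lambda>n. a n * F n p) 3 *\<^sub>R D 3 p = 0"
    using s unfolding sum3 by simp
  then have "(\<lambda>n. a n * F n p) 1 = 0 \<and> (\<lambda>n. a n * F n p) 2 = 0 \<and> (\<lambda>n. a n * F n p) 3 = 0"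
    by (rule frame_ind[OF fr])
  then have "a n * F n p = 0" using n by auto
  then show "a n = 0" using nz n by auto
qed

lemma struct_scale:
  fixes D :: "nat \<Rightarrow> pt \<Rightarrow> real^3" and F :: "nat \<Rightarrow> pt \<Rightarrow> real"
  assumes fr: "is_frame D" and fr': "is_frame (\<lambda>n q. F n q *\<^sub>R D n q)"
    and nz: "\<forall>n\<in>{1,2,3}. F n p \<noteq> 0"
    and dD: "\<forall>n q. D n differentiable (at q)" and dF: "\<forall>n q. F n differentiable (at q)"
    and ij: "i \<in> {1,2,3}" "j \<in> {1,2,3}" "i \<noteq> j"
  shows "struct_fun (\<lambda>n q. F n q *\<^sub>R D n q) j i j p =
     (F i p * F j p * struct_fun D j i j p + F i p * frechet_derivative (F j) (at p) (D i p)) / F j p"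
proof -
  let ?D' = "\<lambda>n q. F n q *\<^sub>R D n q"
  obtain a where a0: "\<forall>n. n \<notin> {1,2,3} \<longrightarrow> a n = 0"
    and rep: "lie_bracket (D i) (D j) p = (\<Sum>n\<in>{1,2,3::nat}. a n *\<^sub>R D n p)"
    using frame_rep[OF fr] by blast
  have sf: "struct_fun D j i j p = a j" by (rule struct_unique[OF fr a0 rep])
  let ?dFj = "frechet_derivative (F j) (at p) (D i p)"
  let ?dFi = "frechet_derivative (F i) (at p) (D j p)"
  have dD': "frechet_derivative (?D' n) (at p) v = F n p *\<^sub>R frechet_derivative (D n) (at p) v + frechet_derivative (F n) (at p) v *\<^sub>R D n p" for n v
    using fd_scaleR dD dF by blast
  have lie': "lie_bracket (?D' i) (?D' j) p = (F i p * F j p) *\<^sub>R lie_bracket (D i) (D j) p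
      + (F i p * ?dFj) *\<^sub>R D j p - (F j p * ?dFi) *\<^sub>R D i p"
    unfolding lie_bracket_def dD'
    using dD dF by (simp add: fd_lin_scale fd_lin_scale_real scaleR_diff_right algebra_simps)
  define b where "b n = (if n \<in> {1,2,3} then (F i p * F j p * a n + (if n = j then F i p * ?dFj else 0)
        - (if n = i then F j p * ?dFi else 0)) / F n p else 0)" for n
  have b0: "\<forall>n. n \<notin> {1,2,3} \<longrightarrow> b n = 0" unfolding b_def by simp
  have "(\<Sum>n\<in>{1,2,3::nat}. b n *\<^sub>R ?D' n p) = (\<Sum>n\<in>{1,2,3::nat}. (F i p * F j p * a n) *\<^sub>R D n p
      + (if n = j then (F i p * ?dFj) *\<^sub>R D j p else 0) - (if n = i then (F j p * ?dFi) *\<^sub>R D i p else 0))"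
  proof (rule sum.cong[OF refl])
    fix n :: nat assume n: "n \<in> {1,2,3}"
    have Fn: "F n p \<noteq> 0" using nz n by blast
    have "b n * F n p = F i p * F j p * a n + (if n = j then F i p * ?dFj else 0)
        - (if n = i then F j p * ?dFi else 0)" using n Fn unfolding b_def by simp
    from this show "b n *\<^sub>R ?D' n p = (F i p * F j p * a n) *\<^sub>R D n p
      + (if n = j then (F i p * ?dFj) *\<^sub>R D j p else 0) - (if n = i then (F j p * ?dFi) *\<^sub>R D i p else 0)"
      by (simp add: scaleR_add_left scaleR_diff_left)
  qed
  also have "\<dots> = (F i p * F j p) *\<^sub>R (\<Sum>n\<in>{1,2,3::nat}. a n *\<^sub>R D n p)
      + (F i p * ?dFj) *\<^sub>R D j p - (F j p * ?dFi) *\<^sub>R D i p"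
  proof -
    have s1: "(\<Sum>n\<in>{1,2,3::nat}. (F i p * F j p * a n) *\<^sub>R D n p) = (F i p * F j p) *\<^sub>R (\<Sum>n\<in>{1,2,3::nat}. a n *\<^sub>R D n p)"
      by (simp only: scaleR_sum_right scaleR_scaleR)
    have s2: "(\<Sum>n\<in>{1,2,3::nat}. (if n = j then (F i p * ?dFj) *\<^sub>R D j p else 0)) = (F i p * ?dFj) *\<^sub>R D j p"
      using ij by (subst sum.delta) auto
    have s3: "(\<Sum>n\<in>{1,2,3::nat}. (if n = i then (F j p * ?dFi) *\<^sub>R D i p else 0)) = (F j p * ?dFi) *\<^sub>R D i p"
      using ij by (subst sum.delta) auto
    show ?thesis unfolding sum_subtractf sum.distrib s1 s2 s3 ..
  qed
  finally have rep': "lie_bracket (?D' i) (?D' j) p = (\<Sum>n\<in>{1,2,3::nat}. b n *\<^sub>R ?D' n p)"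
    using lie' rep by simp
  have "struct_fun ?D' j i j p = b j" by (rule struct_unique[OF fr' b0 rep'])
  then show ?thesis using ij sf unfolding b_def by simp
qed



lemma alg:
  fixes A Fi a b c da db dc dA dx cj ck L w :: real
  assumes A: "A \<noteq> 0"
    and E2: "0 = (db+dc) + cj*(a-b) + ck*(a-c) - 2*dx*a"
    and E1: "b*c + c*a + a*b = 0"
    and dE1: "b*dc + db*c + (c*da + dc*a) + (a*db + da*b) = 0"
  shows "0 = Fi*(A*db + dA*b + (A*dc + dA*c))
     + Fi*(cj + (dA*inverse A + (dc+da)*L + (c+a)*w))*(A*a - A*b)
     + Fi*(ck + (dA*inverse A + (da+db)*L + (a+b)*w))*(A*a - A*c)
     - 2*(Fi*(dx + dA*inverse A + ((da+db+dc)*L + (a+b+c)*w)))*(A*a)"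
proof -
  define u where "u = dA * inverse A"
  have dAu: "dA = A * u" using A unfolding u_def by simp
  have "Fi*(A*db + dA*b + (A*dc + dA*c))
     + Fi*(cj + (dA*inverse A + (dc+da)*L + (c+a)*w))*(A*a - A*b)
     + Fi*(ck + (dA*inverse A + (da+db)*L + (a+b)*w))*(A*a - A*c)
     - 2*(Fi*(dx + dA*inverse A + ((da+db+dc)*L + (a+b+c)*w)))*(A*a)
     = Fi*(A*u*b + A*u*c + A*(db+dc))
     + Fi*(cj + u + (dc+da)*L + (c+a)*w)*(A*a - A*b)
     + Fi*(ck + u + (da+db)*L + (a+b)*w)*(A*a - A*c)
     - 2*(Fi*(dx + u + ((da+db+dc)*L + (a+b+c)*w)))*(A*a)"
    unfolding dAu using A by (simp add: field_simps)
  also have "\<dots> = Fi*A*((db+dc) + cj*(a-b) + ck*(a-c) - 2*dx*a)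
      - Fi*A*L*(b*dc + db*c + (c*da + dc*a) + (a*db + da*b)) - 2*Fi*A*w*(b*c + c*a + a*b)"
    by (simp add: algebra_simps)
  also have "\<dots> = 0" using E2 E1 dE1 by simp
  finally show ?thesis by simp
qed



lemma rd: "R f \<Longrightarrow> f differentiable (at p)"
  using R_props by blast

lemma triple:
  fixes g F :: "nat \<Rightarrow> pt \<Rightarrow> real" and D :: "nat \<Rightarrow> pt \<Rightarrow> real^3"
    and A B \<xi> \<xi>' :: "pt \<Rightarrow> real" and \<sigma> :: real
  assumes fr: "is_frame D" and fr': "is_frame (\<lambda>n q. F n q *\<^sub>R D n q)"
    and dD: "\<forall>n q. D n differentiable (at q)" and dF: "\<forall>n q. F n differentiable (at q)"
    and sg: "\<forall>n. smooth_fun (g n)" and sA: "smooth_fun A" and sB: "smooth_fun B" and sx: "smooth_fun \<xi>"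
    and Apos: "\<forall>q. A q > 0" and Bpos: "\<forall>q. B q > 0" and sig: "\<sigma> \<noteq> 0"
    and ijk: "i \<in> {1,2,3}" "j \<in> {1,2,3}" "k \<in> {1,2,3}" "i \<noteq> j" "i \<noteq> k" "j \<noteq> k"
    and Fi: "F i = (\<lambda>q. \<sigma> * A q * exp ((g j q + g k q) * ln (B q)))"
    and Fj: "F j = (\<lambda>q. \<sigma> * A q * exp ((g k q + g i q) * ln (B q)))"
    and Fk: "F k = (\<lambda>q. \<sigma> * A q * exp ((g i q + g j q) * ln (B q)))"
    and E1: "\<forall>q. g j q * g k q + g k q * g i q + g i q * g j q = 0"
    and E2: "0 = vf_app (D i) (\<lambda>q. g j q + g k q) p + struct_fun D j i j p * (g i p - g j p)
              + struct_fun D k i k p * (g i p - g k p) - 2 * vf_app (D i) \<xi> p * g i p"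
    and xi': "\<xi>' = (\<lambda>q. \<xi> q + ln (A q) + (g i q + g j q + g k q) * ln (B q))"
  shows "0 = vf_app (\<lambda>q. F i q *\<^sub>R D i q) (\<lambda>q. A q * g j q + A q * g k q) p
     + struct_fun (\<lambda>n q. F n q *\<^sub>R D n q) j i j p * (A p * g i p - A p * g j p)
     + struct_fun (\<lambda>n q. F n q *\<^sub>R D n q) k i k p * (A p * g i p - A p * g k p)
     - 2 * vf_app (\<lambda>q. F i q *\<^sub>R D i q) \<xi>' p * (A p * g i p)"
proof -
  have RA: "R A" and RB: "R B" and Rx: "R \<xi>" and Rg: "\<And>n. R (g n)"
    using sA sB sx sg by (auto intro: R.Rbase)
  have dA: "A differentiable (at q)" and dB: "B differentiable (at q)" and dx: "\<xi> differentiable (at q)"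
    and dg: "\<And>n. g n differentiable (at q)" for q
    using RA RB Rx Rg rd by blast+
  let ?v = "D i p"
  define dA' where "dA' = frechet_derivative A (at p) ?v"
  define dB' where "dB' = frechet_derivative B (at p) ?v"
  define dx' where "dx' = frechet_derivative \<xi> (at p) ?v"
  define da where "da = frechet_derivative (g i) (at p) ?v"
  define db where "db = frechet_derivative (g j) (at p) ?v"
  define dc where "dc = frechet_derivative (g k) (at p) ?v"
  define L where "L = ln (B p)"
  have Ap: "A p \<noteq> 0" and Bp: "B p > 0" using Apos Bpos by (metis less_irrefl, blast)
  have nz: "\<forall>n\<in>{1,2,3}. F n p \<noteq> 0"
  proof
    fix n :: nat assume n: "n \<in> {1,2,3}"
    then have "n = i \<or> n = j \<or> n = k" using ijk by auto
    then show "F n p \<noteq> 0" using Fi Fj Fk Ap sig by auto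
  qed
  have Fjp: "F j p \<noteq> 0" and Fkp: "F k p \<noteq> 0" using nz ijk by blast+
  have Bp0: "B p \<noteq> 0" using Bp by simp
  have vfs: "vf_app (\<lambda>q. F i q *\<^sub>R D i q) h p = F i p * frechet_derivative h (at p) ?v"
    if "h differentiable (at p)" for h
    unfolding vf_app_def using that fd_lin_scale_real by blast
  have dexp: "frechet_derivative (\<lambda>q. \<sigma> * A q * exp ((g m q + g n q) * ln (B q))) (at p) ?v
      = \<sigma> * A p * exp ((g m p + g n p) * ln (B p)) *
        (dA' * inverse (A p) + (frechet_derivative (g m) (at p) ?v + frechet_derivative (g n) (at p) ?v) * L
          + (g m p + g n p) * (dB' * inverse (B p)))" for m n
  proof -
    have d1: "(\<lambda>q. \<sigma> * A q) differentiable (at p)" by (intro rd R.Rmult R.Rconst RA)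
    have d2: "(\<lambda>q. exp ((g m q + g n q) * ln (B q))) differentiable (at p)"
      using Bpos by (intro rd R.Rexp R.Rmult R.Radd R.Rln Rg RB) auto
    have d3: "(\<lambda>q. (g m q + g n q) * ln (B q)) differentiable (at p)"
      using Bpos by (intro rd R.Rmult R.Radd R.Rln Rg RB) auto
    have d4: "(\<lambda>q. g m q + g n q) differentiable (at p)" by (intro rd R.Radd Rg)
    have d5: "(\<lambda>q. ln (B q)) differentiable (at p)" using Bpos by (intro rd R.Rln RB) auto
    show ?thesis
      using d1 d2 d3 d4 d5 dA dB dg Ap Bp
      by (simp add: fd_mult fd_const fd_exp fd_add fd_ln dA'_def dB'_def L_def field_simps)
  qed
  have hFj: "frechet_derivative (F j) (at p) ?v = F j p * (dA' * inverse (A p) + (dc + da) * L + (g k p + g i p) * (dB' * inverse (B p)))"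
    unfolding Fj dexp dc_def da_def ..
  have hFk: "frechet_derivative (F k) (at p) ?v = F k p * (dA' * inverse (A p) + (da + db) * L + (g i p + g j p) * (dB' * inverse (B p)))"
    unfolding Fk dexp da_def db_def ..
  have cj: "struct_fun (\<lambda>n q. F n q *\<^sub>R D n q) j i j p = F i p * (struct_fun D j i j p + (dA' * inverse (A p) + (dc + da) * L + (g k p + g i p) * (dB' * inverse (B p))))"
    unfolding struct_scale[OF fr fr' nz dD dF ijk(1) ijk(2) ijk(4)] hFj using Fjp Ap Bp0
    by (simp add: field_simps)
  have ck: "struct_fun (\<lambda>n q. F n q *\<^sub>R D n q) k i k p = F i p * (struct_fun D k i k p + (dA' * inverse (A p) + (da + db) * L + (g i p + g j p) * (dB' * inverse (B p))))"
    unfolding struct_scale[OF fr fr' nz dD dF ijk(1) ijk(3) ijk(5)] hFk using Fkp Ap Bp0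
    by (simp add: field_simps)
  have v1: "vf_app (\<lambda>q. F i q *\<^sub>R D i q) (\<lambda>q. A q * g j q + A q * g k q) p = F i p * (A p * db + dA' * g j p + (A p * dc + dA' * g k p))"
  proof -
    have "(\<lambda>q. A q * g j q + A q * g k q) differentiable (at p)" by (intro rd R.Radd R.Rmult RA Rg)
    then show ?thesis using dA dg
      by (simp add: vfs fd_add fd_mult dA'_def db_def dc_def)
  qed
  have v2: "vf_app (\<lambda>q. F i q *\<^sub>R D i q) \<xi>' p = F i p * (dx' + dA' * inverse (A p) + ((da + db + dc) * L + (g i p + g j p + g k p) * (dB' * inverse (B p))))"
  proof -
    have d1: "\<xi>' differentiable (at p)" unfolding xi' using Apos Bpos
      by (intro rd R.Radd R.Rmult R.Rln Rg RB RA Rx) auto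
    have d2: "(\<lambda>q. \<xi> q + ln (A q)) differentiable (at p)" using Apos
      by (intro rd R.Radd R.Rln RA Rx) auto
    have d3: "(\<lambda>q. g i q + g j q + g k q) differentiable (at p)" by (intro rd R.Radd Rg)
    have d3': "(\<lambda>q. g i q + g j q) differentiable (at p)" by (intro rd R.Radd Rg)
    have d4: "(\<lambda>q. ln (B q)) differentiable (at p)" using Bpos by (intro rd R.Rln RB) auto
    have d5: "(\<lambda>q. ln (A q)) differentiable (at p)" using Apos by (intro rd R.Rln RA) auto
    have d6: "(\<lambda>q. (g i q + g j q + g k q) * ln (B q)) differentiable (at p)" using d3 d4 by (rule differentiable_mult)
    have Ap': "A p > 0" using Apos by blast
    show ?thesis using d1 d2 d3 d3' d4 d5 d6 dA dB dx dg Ap' Bp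
      by (simp add: vfs xi' fd_add fd_mult fd_ln dA'_def dB'_def dx'_def da_def db_def dc_def L_def algebra_simps)
  qed
  have e2: "0 = (db + dc) + struct_fun D j i j p * (g i p - g j p) + struct_fun D k i k p * (g i p - g k p) - 2 * dx' * g i p"
    using E2 dg unfolding vf_app_def db_def dc_def dx'_def by (simp add: fd_add)
  have de1: "g j p * dc + db * g k p + (g k p * da + dc * g i p) + (g i p * db + da * g j p) = 0"
  proof -
    have z: "(\<lambda>q. g j q * g k q + g k q * g i q + g i q * g j q) = (\<lambda>q. 0)" using E1 by auto
    have "frechet_derivative (\<lambda>q. g j q * g k q + g k q * g i q + g i q * g j q) (at p) ?v = 0"
      unfolding z by (rule fd_const)
    moreover have "(\<lambda>q. g j q * g k q + g k q * g i q) differentiable (at p)" by (intro rd R.Radd R.Rmult Rg)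
    moreover have "(\<lambda>q. g j q * g k q) differentiable (at p)" "(\<lambda>q. g k q * g i q) differentiable (at p)"
      "(\<lambda>q. g i q * g j q) differentiable (at p)" by (intro rd R.Rmult Rg)+
    ultimately show ?thesis using dg by (simp add: fd_add fd_mult da_def db_def dc_def)
  qed
  have e1: "g j p * g k p + g k p * g i p + g i p * g j p = 0" using E1 by blast
  show ?thesis unfolding v1 v2 cj ck
    by (rule alg[OF Ap e2 e1 de1])
qed



theorem lemma6p8:
  fixes g1 g2 g3 \<xi> A B :: "pt \<Rightarrow> real" and D1 D2 D3 :: "pt \<Rightarrow> real^3" and \<sigma> :: real
  assumes "MC_pre g1 g2 g3 D1 D2 D3 \<xi>"
    and "smooth_fun A" and "smooth_fun B"
    and "\<forall>p. A p > 0" and "\<forall>p. B p > 0"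
    and "\<sigma> \<in> {-1, 1}"
  shows "MC_pre (\<lambda>p. A p * g1 p) (\<lambda>p. A p * g2 p) (\<lambda>p. A p * g3 p)
     (\<lambda>p. (\<sigma> * A p * exp ((g2 p + g3 p) * ln (B p))) *\<^sub>R D1 p)
     (\<lambda>p. (\<sigma> * A p * exp ((g3 p + g1 p) * ln (B p))) *\<^sub>R D2 p)
     (\<lambda>p. (\<sigma> * A p * exp ((g1 p + g2 p) * ln (B p))) *\<^sub>R D3 p)
     (\<lambda>p. \<xi> p + ln (A p) + (g1 p + g2 p + g3 p) * ln (B p))"
proof -
  note mc = assms(1) and sA = assms(2) and sB = assms(3) and Apos = assms(4) and Bpos = assms(5)
  have sig: "\<sigma> \<noteq> 0" using assms(6) by auto
  define g where "g = idx3 g1 g2 g3"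
  define D where "D = idx3 D1 D2 D3"
  define F where "F = idx3 (\<lambda>p. \<sigma> * A p * exp ((g2 p + g3 p) * ln (B p)))
     (\<lambda>p. \<sigma> * A p * exp ((g3 p + g1 p) * ln (B p))) (\<lambda>p. \<sigma> * A p * exp ((g1 p + g2 p) * ln (B p)))"
  define \<xi>' where "\<xi>' = (\<lambda>p. \<xi> p + ln (A p) + (g1 p + g2 p + g3 p) * ln (B p))"
  have s1: "smooth_fun g1" and s2: "smooth_fun g2" and s3: "smooth_fun g3" and sx: "smooth_fun \<xi>"
    and fr: "is_frame D"
    and E1: "\<forall>p. 0 = g2 p * g3 p + g3 p * g1 p + g1 p * g2 p"
    and E2: "\<forall>(i,j,k)\<in>cyclic3. \<forall>p.
        0 = vf_app (D i) (\<lambda>q. g j q + g k q) p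
            + struct_fun D j i j p * (g i p - g j p) + struct_fun D k i k p * (g i p - g k p)
            - 2 * vf_app (D i) \<xi> p * g i p"
    using mc unfolding MC_pre_def Let_def g_def[symmetric] D_def[symmetric] by blast+
  have sg: "\<forall>n. smooth_fun (g n)" using s1 s2 s3 unfolding g_def idx3_def by auto
  have Rg: "\<And>n. R (g n)" using sg by (auto intro: R.Rbase)
  have RA: "R A" "R B" using sA sB by (auto intro: R.Rbase)
  have RFe: "R (\<lambda>p. \<sigma> * A p * exp ((g m p + g n p) * ln (B p)))" for m n
    using Bpos by (intro R.Rmult R.Rconst R.Rexp R.Radd R.Rln Rg RA) auto
  have RF: "\<And>n. R (F n)"
  proof -
    fix n
    have "F n = (\<lambda>p. \<sigma> * A p * exp ((g 2 p + g 3 p) * ln (B p))) \<or> F n = (\<lambda>p. \<sigma> * A p * exp ((g 3 p + g 1 p) * ln (B p)))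
      \<or> F n = (\<lambda>p. \<sigma> * A p * exp ((g 1 p + g 2 p) * ln (B p)))"
      unfolding F_def g_def idx3_def by auto
    then show "R (F n)" by (elim disjE) (simp_all only: RFe)
  qed
  have F1: "F 1 = (\<lambda>q. \<sigma> * A q * exp ((g 2 q + g 3 q) * ln (B q)))"
   and F2: "F 2 = (\<lambda>q. \<sigma> * A q * exp ((g 3 q + g 1 q) * ln (B q)))"
   and F3: "F 3 = (\<lambda>q. \<sigma> * A q * exp ((g 1 q + g 2 q) * ln (B q)))"
    unfolding F_def g_def idx3_def by auto
  have nzF: "\<forall>n\<in>{1,2,3}. \<forall>q. F n q \<noteq> 0"
  proof (intro ballI allI)
    fix n q assume n: "n \<in> {1::nat,2,3}"
    have Aq: "A q \<noteq> 0" using Apos by (metis less_irrefl)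
    from n consider "n = 1" | "n = 2" | "n = 3" by blast
    then show "F n q \<noteq> 0" by cases (simp only: F1 F2 F3, simp add: sig Aq)+
  qed
  have smF: "\<forall>n\<in>{1,2,3}. smooth_fun (F n)" using RF R_smooth by blast
  have fr': "is_frame (\<lambda>n q. F n q *\<^sub>R D n q)" by (rule frame_scale[OF fr nzF smF])
  have dD: "\<forall>n q. D n differentiable (at q)"
  proof (intro allI)
    fix n q
    have "smooth_vf (D m)" if "m \<in> {1,2,3}" for m using fr that unfolding is_frame_def by blast
    moreover have "D n = D 1 \<or> D n = D 2 \<or> D n = D 3" unfolding D_def idx3_def by auto
    ultimately show "D n differentiable (at q)"
      by (elim disjE) (simp_all add: vf_diff)
  qed
  have dF: "\<forall>n q. F n differentiable (at q)" using RF rd by blast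
  have E1': "\<forall>q. g j q * g k q + g k q * g i q + g i q * g j q = 0"
    if "(i,j,k) \<in> cyclic3" for i j k
  proof
    fix q
    have "0 = g2 q * g3 q + g3 q * g1 q + g1 q * g2 q" using E1 by blast
    then show "g j q * g k q + g k q * g i q + g i q * g j q = 0" using that
      unfolding cyclic3_def g_def idx3_def by (auto simp: algebra_simps)
  qed
  have key: "0 = vf_app (\<lambda>q. F i q *\<^sub>R D i q) (\<lambda>q. A q * g j q + A q * g k q) p
     + struct_fun (\<lambda>n q. F n q *\<^sub>R D n q) j i j p * (A p * g i p - A p * g j p)
     + struct_fun (\<lambda>n q. F n q *\<^sub>R D n q) k i k p * (A p * g i p - A p * g k p)
     - 2 * vf_app (\<lambda>q. F i q *\<^sub>R D i q) \<xi>' p * (A p * g i p)"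
    if c: "(i,j,k) \<in> cyclic3" for i j k p
  proof -
    have E2': "0 = vf_app (D i) (\<lambda>q. g j q + g k q) p + struct_fun D j i j p * (g i p - g j p)
              + struct_fun D k i k p * (g i p - g k p) - 2 * vf_app (D i) \<xi> p * g i p"
      using E2 c by blast
    have xi': "\<xi>' = (\<lambda>q. \<xi> q + ln (A q) + (g i q + g j q + g k q) * ln (B q))"
      using c unfolding \<xi>'_def cyclic3_def g_def idx3_def by (auto simp: add_ac)
    from c consider "i = 1" "j = 2" "k = 3" | "i = 2" "j = 3" "k = 1" | "i = 3" "j = 1" "k = 2"
      unfolding cyclic3_def by auto
    then show ?thesis
    proof cases
      case 1
      show ?thesis using 1 E1'[OF c] E2' xi'
        by (intro triple[OF fr fr' dD dF sg sA sB sx Apos Bpos sig]) (auto simp: F1[unfolded One_nat_def] F2 F3)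
    next
      case 2
      show ?thesis using 2 E1'[OF c] E2' xi'
        by (intro triple[OF fr fr' dD dF sg sA sB sx Apos Bpos sig]) (auto simp: F1[unfolded One_nat_def] F2 F3)
    next
      case 3
      show ?thesis using 3 E1'[OF c] E2' xi'
        by (intro triple[OF fr fr' dD dF sg sA sB sx Apos Bpos sig]) (auto simp: F1[unfolded One_nat_def] F2 F3)
    qed
  qed
  have hD': "idx3 (\<lambda>p. (\<sigma> * A p * exp ((g2 p + g3 p) * ln (B p))) *\<^sub>R D1 p)
     (\<lambda>p. (\<sigma> * A p * exp ((g3 p + g1 p) * ln (B p))) *\<^sub>R D2 p)
     (\<lambda>p. (\<sigma> * A p * exp ((g1 p + g2 p) * ln (B p))) *\<^sub>R D3 p) = (\<lambda>n q. F n q *\<^sub>R D n q)"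
    unfolding F_def D_def idx3_def by auto
  have hg': "idx3 (\<lambda>p. A p * g1 p) (\<lambda>p. A p * g2 p) (\<lambda>p. A p * g3 p) = (\<lambda>n q. A q * g n q)"
    unfolding g_def idx3_def by auto
  have sAg: "smooth_fun (\<lambda>p. A p * g n p)" for n by (intro R_smooth[OF R.Rmult] RA Rg)
  have sAg1: "smooth_fun (\<lambda>p. A p * g1 p)" "smooth_fun (\<lambda>p. A p * g2 p)" "smooth_fun (\<lambda>p. A p * g3 p)"
    using sAg[of 1] sAg[of 2] sAg[of 3] unfolding g_def idx3_def by auto
  have sxi': "smooth_fun \<xi>'" unfolding \<xi>'_def using Apos Bpos s1 s2 s3 sx
    by (intro R_smooth[OF R.Radd] R.Radd R.Rmult R.Rln RA R.Rbase) auto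
  have E1n: "\<forall>p. 0 = A p * g2 p * (A p * g3 p) + A p * g3 p * (A p * g1 p) + A p * g1 p * (A p * g2 p)"
  proof
    fix p
    have "0 = (A p * A p) * (g2 p * g3 p + g3 p * g1 p + g1 p * g2 p)" using E1 by simp
    then show "0 = A p * g2 p * (A p * g3 p) + A p * g3 p * (A p * g1 p) + A p * g1 p * (A p * g2 p)"
      by (simp add: algebra_simps)
  qed
  show ?thesis
    unfolding MC_pre_def Let_def hD' hg' \<xi>'_def[symmetric]
    using sAg1 sxi' fr' E1n key by auto
qed

end
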